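(* Let $k\ge1$, let $l\le m$ be positive integers, and let $P$ be a polynomial with $P(m)>0$. Let $S_{l,P(m)}=\{A\in M_l : |\mathcal{V}(X\otimes Y=A)|>P(m)\}$. Then $|S_{l,P(m)}|\le \dfrac{m^{k^2+1}}{P(m)}\,|M_l|$.
   Context: Max-times product on $\mathrm{Mat}_k(\mathbb{Z}_{\geq 1})$: $(X\otimes Y)_{ij}=\max_{1\le l\le k}(x_{il}\cdot y_{lj})$. For $a\ge1$, $\mathrm{size}_2(a)=\lfloor\log_2 a\rfloor+1$; for a $k\times k$ matrix $A$, $\mathrm{size}_2(A)=\sum_{i,j}\mathrm{size}_2(a_{ij})+k^2-1$. $M_l=\{A\in\mathrm{Mat}_k(\mathbb{Z}_{\geq 1}) : \mathrm{size}_2(A)=l\}$. For $A\in\mathrm{Mat}_k(\mathbb{Z}_{\geq 1})$, $\mathcal{V}(X\otimes Y=A)$ is the set of pairs $(X,Y)\in\mathrm{Mat}_k(\mathbb{Z}_{\geq 1})^2$ with $X\otimes Y=A$. *)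

theory Defs
  imports Complex_Main "HOL-Computational_Algebra.Polynomial"
begin

text \<open>k x k matrices with positive integer entries, represented as functions
  nat => nat => nat, with indices 0..k-1 and value 0 outside the index range
  (so that each matrix has a unique representation).\<close>
definition mat_pos :: "nat \<Rightarrow> (nat \<Rightarrow> nat \<Rightarrow> nat) set" where
  "mat_pos k = {A. (\<forall>i<k. \<forall>j<k. 1 \<le> A i j) \<and> (\<forall>i j. \<not> (i < k \<and> j < k) \<longrightarrow> A i j = 0)}"

definition maxtimes :: "nat \<Rightarrow> (nat \<Rightarrow> nat \<Rightarrow> nat) \<Rightarrow> (nat \<Rightarrow> nat \<Rightarrow> nat) \<Rightarrow> (nat \<Rightarrow> nat \<Rightarrow> nat)" where
  "maxtimes k X Y = (\<lambda>i j. if i < k \<and> j < k then Max {X i l * Y l j | l. l < k} else 0)"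

definition size2 :: "nat \<Rightarrow> nat" where
  "size2 a = nat \<lfloor>log 2 (real a)\<rfloor> + 1"

definition size2_mat :: "nat \<Rightarrow> (nat \<Rightarrow> nat \<Rightarrow> nat) \<Rightarrow> nat" where
  "size2_mat k A = (\<Sum>i<k. \<Sum>j<k. size2 (A i j)) + k^2 - 1"

definition Ml :: "nat \<Rightarrow> nat \<Rightarrow> (nat \<Rightarrow> nat \<Rightarrow> nat) set" where
  "Ml k l = {A \<in> mat_pos k. size2_mat k A = l}"

definition Vsol :: "nat \<Rightarrow> (nat \<Rightarrow> nat \<Rightarrow> nat) \<Rightarrow> ((nat \<Rightarrow> nat \<Rightarrow> nat) \<times> (nat \<Rightarrow> nat \<Rightarrow> nat)) set" where
  "Vsol k A = {(X, Y). X \<in> mat_pos k \<and> Y \<in> mat_pos k \<and> maxtimes k X Y = A}"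

definition Sset :: "nat \<Rightarrow> nat \<Rightarrow> real \<Rightarrow> (nat \<Rightarrow> nat \<Rightarrow> nat) set" where
  "Sset k l c = {A \<in> Ml k l. real (card (Vsol k A)) > c}"

end

theory Submission imports Defs "HOL-Library.FuncSet" begin

lemma size2_eqI:
  assumes "1 \<le> s" "2^(s-1) \<le> a" "a < 2^s"
  shows "size2 a = s"
proof -
  have "floor (log (real (2::nat)) (real a)) = int (s-1)"
    using floor_log_nat_eq_if[of 2 "s-1" a] assms by simp
  then show ?thesis using assms unfolding size2_def by simp
qed

lemma size2_char:
  assumes "1 \<le> a"
  shows "2^(size2 a - 1) \<le> a \<and> a < 2^(size2 a)"
proof -
  have "log 2 (real a) \<ge> 0" using assms by simp
  then obtain n :: nat where n: "floor (log 2 (real a)) = int n"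
    by (metis zero_le_floor nonneg_int_cases)
  have "floor (log (real (2::nat)) (real a)) = int n" using n by simp
  then have "2^n \<le> a \<and> a < 2^(n+1)"
    using floor_log_nat_eq_powr_iff[of 2 a n] assms by simp
  moreover have "size2 a = n + 1" unfolding size2_def using n by simp
  ultimately show ?thesis by simp
qed

lemma size2_ge1: "1 \<le> size2 a" unfolding size2_def by simp

lemma size2_mono:
  assumes "1 \<le> a" "a \<le> b" shows "size2 a \<le> size2 b"
proof -
  have "2^(size2 a - 1) \<le> a" "b < 2^(size2 b)" using size2_char assms by auto
  then have "(2::nat)^(size2 a - 1) < 2^(size2 b)" using assms by linarith
  then have "size2 a - 1 < size2 b" using power_less_imp_less_exp by fastforce
  then show ?thesis by simp
qed

lemma size2_shift:
  assumes "1 \<le> b" shows "size2 (b * 2^D) = size2 b + D"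
proof -
  have c: "2^(size2 b - 1) \<le> b" "b < 2^(size2 b)" using size2_char assms by auto
  have s: "1 \<le> size2 b" by (rule size2_ge1)
  show ?thesis
  proof (rule size2_eqI)
    show "2 ^ (size2 b + D - 1) \<le> b * 2 ^ D"
      using c s by (metis Nat.add_diff_assoc2 mult_le_mono1 power_add)
    show "b * 2 ^ D < 2 ^ (size2 b + D)" using c by (simp add: power_add)
  qed (use s in simp)
qed

lemma dec:
  fixes x1 x2 y1 y2 :: nat
  assumes "1 \<le> y1" "1 \<le> y2" "size2 y1 = size2 y2"
    "x1*2^(size2 y1 - 1) + y1 mod 2^(size2 y1 - 1) = x2*2^(size2 y2 - 1) + y2 mod 2^(size2 y2 - 1)"
  shows "x1 = x2 \<and> y1 = y2"
proof -
  define p :: nat where "p = 2^(size2 y1 - 1)"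
  have p0: "p > 0" unfolding p_def by simp
  have divp: "\<And>y. p \<le> y \<Longrightarrow> y < 2*p \<Longrightarrow> y div p = 1"
  proof -
    fix y assume a: "p \<le> y" "y < 2*p"
    have "y = p + (y - p)" using a by simp
    then have "y div p = (p + (y-p)) div p" by simp
    also have "\<dots> = 1 + (y-p) div p" using p0 by simp
    also have "(y-p) div p = 0" using a by simp
    finally show "y div p = 1" by simp
  qed
  have e: "x1*p + y1 mod p = x2*p + y2 mod p" using assms unfolding p_def by simp
  have "(x1*p + y1 mod p) div p = x1" using p0 by simp
  moreover have "(x2*p + y2 mod p) div p = x2" using p0 by simp
  ultimately have x: "x1 = x2" using e by simp
  have m: "y1 mod p = y2 mod p" using e x by simp
  have "p \<le> y1" "y1 < 2*p" using size2_char[OF assms(1)] size2_ge1[of y1] unfolding p_def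
    by (auto simp: power_Suc[symmetric])
  then have "y1 div p = 1" using divp by blast
  have "p \<le> y2" "y2 < 2*p" using size2_char[OF assms(2)] size2_ge1[of y2] assms(3) unfolding p_def
    by (auto simp: power_Suc[symmetric])
  then have "y2 div p = 1" using divp by blast
  have "y1 = p * (y1 div p) + y1 mod p" by simp
  also have "\<dots> = p * (y2 div p) + y2 mod p" using \<open>y1 div p = 1\<close> \<open>y2 div p = 1\<close> m by simp
  also have "\<dots> = y2" by simp
  finally show ?thesis using x by simp
qed

lemma enc_bounds:
  fixes x y :: nat
  assumes "1 \<le> x" "1 \<le> y"
  shows "1 \<le> x*2^(size2 y - 1) + y mod 2^(size2 y - 1)"
    and "x*2^(size2 y - 1) + y mod 2^(size2 y - 1) \<le> x*y"
proof -
  define p :: nat where "p = 2^(size2 y - 1)"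
  have p0: "p \<ge> 1" unfolding p_def by simp
  show "1 \<le> x*2^(size2 y - 1) + y mod 2^(size2 y - 1)" using p0 assms unfolding p_def[symmetric]
  proof -
    have "1 \<le> x * p" using p0 assms(1) by (metis mult_le_mono mult_1)
    then show "1 \<le> x * p + y mod p" by linarith
  qed
  have "p \<le> y" using size2_char[OF assms(2)] unfolding p_def by simp
  have "y mod p \<le> x * (y - p)"
  proof -
    have "y mod p < p" using p0 by simp
    have "y mod p \<le> y - p"
    proof -
      have "y = p + (y - p)" using \<open>p \<le> y\<close> by simp
      then have "y mod p = (p + (y-p)) mod p" by simp
      also have "\<dots> = (y-p) mod p" by simp
      finally show ?thesis by simp
    qed
    moreover have "y - p \<le> x * (y - p)" using assms(1) by simp
    ultimately show ?thesis by linarith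
  qed
  then have "x*p + y mod p \<le> x*p + x*(y-p)" by simp
  also have "\<dots> = x*y" using \<open>p \<le> y\<close> by (simp add: diff_mult_distrib2)
  finally show "x*2^(size2 y - 1) + y mod 2^(size2 y - 1) \<le> x*y" unfolding p_def .
qed

lemma sig1: "(i::nat) < k \<Longrightarrow> l < k \<Longrightarrow> (i + (l + k - i) mod k) mod k = l"
  by (simp add: mod_add_right_eq)
lemma sig2: "(j::nat) < k \<Longrightarrow> l < k \<Longrightarrow> ((l + k - j) mod k + j) mod k = l"
  by (simp add: mod_add_left_eq)

definition sg :: "nat \<Rightarrow> nat \<Rightarrow> nat \<Rightarrow> nat" where "sg k i j = (i + j) mod k"
definition cc :: "nat \<Rightarrow> nat \<Rightarrow> nat" where "cc x y = x*2^(size2 y - 1) + y mod 2^(size2 y - 1)"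
definition encB :: "nat \<Rightarrow> (nat \<Rightarrow> nat \<Rightarrow> nat) \<Rightarrow> (nat \<Rightarrow> nat \<Rightarrow> nat) \<Rightarrow> (nat \<Rightarrow> nat \<Rightarrow> nat)" where
  "encB k X Y = (\<lambda>i j. if i < k \<and> j < k then cc (X i (sg k i j)) (Y (sg k i j) j) else 0)"
definition ssum :: "nat \<Rightarrow> (nat \<Rightarrow> nat \<Rightarrow> nat) \<Rightarrow> nat" where
  "ssum k A = (\<Sum>i<k. \<Sum>j<k. size2 (A i j))"
definition padB :: "(nat \<Rightarrow> nat \<Rightarrow> nat) \<Rightarrow> nat \<Rightarrow> (nat \<Rightarrow> nat \<Rightarrow> nat)" where
  "padB B D = (\<lambda>i j. if i = 0 \<and> j = 0 then B i j * 2^D else B i j)"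
definition tab :: "nat \<Rightarrow> (nat \<Rightarrow> nat \<Rightarrow> nat) \<Rightarrow> (nat \<times> nat \<Rightarrow> nat)" where
  "tab k Y = restrict (\<lambda>(i,j). size2 (Y (sg k i j) j)) ({..<k}\<times>{..<k})"
definition FF :: "nat \<Rightarrow> (nat \<Rightarrow> nat \<Rightarrow> nat) \<times> (nat \<Rightarrow> nat \<Rightarrow> nat) \<times> (nat \<Rightarrow> nat \<Rightarrow> nat)
    \<Rightarrow> (nat \<Rightarrow> nat \<Rightarrow> nat) \<times> (nat \<times> nat \<Rightarrow> nat) \<times> nat" where
  "FF k p = (let A = fst p; X = fst (snd p); Y = snd (snd p);
             D = ssum k A - ssum k (encB k X Y) in (padB (encB k X Y) D, tab k Y, D))"

lemma prod_le:
  assumes "X \<in> mat_pos k" "Y \<in> mat_pos k" "i < k" "j < k" "l < k"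
  shows "X i l * Y l j \<le> maxtimes k X Y i j"
proof -
  have "finite {X i l * Y l j | l. l < k}" by simp
  moreover have "X i l * Y l j \<in> {X i l * Y l j | l. l < k}" using assms by blast
  ultimately show ?thesis unfolding maxtimes_def using assms by simp
qed

lemma entry_le: "i < k \<Longrightarrow> j < k \<Longrightarrow> size2 (A i j) \<le> ssum k A"
proof -
  assume a: "i < k" "j < k"
  have "size2 (A i j) \<le> (\<Sum>j<k. size2 (A i j))"
    using a by (intro member_le_sum) auto
  also have "\<dots> \<le> (\<Sum>i<k. \<Sum>j<k. size2 (A i j))"
    using a by (intro member_le_sum[where f="\<lambda>i. \<Sum>j<k. size2 (A i j)"]) auto
  finally show ?thesis unfolding ssum_def .
qed

lemma ssum_pad:
  assumes "0 < k" "1 \<le> B 0 0"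
  shows "ssum k (padB B D) = ssum k B + D"
proof -
  have row: "(\<Sum>j<k. size2 (padB B D i j)) = (\<Sum>j<k. size2 (B i j)) + (if i = 0 then D else 0)" for i
  proof (cases "i = 0")
    case True
    have "(\<Sum>j<k. size2 (padB B D i j)) = (\<Sum>j<k. size2 (B i j) + (if j = 0 then D else 0))"
      using True assms by (intro sum.cong) (auto simp: padB_def size2_shift)
    also have "\<dots> = (\<Sum>j<k. size2 (B i j)) + D"
      using assms by (simp add: sum.distrib)
    finally show ?thesis using True by simp
  next
    case False
    then show ?thesis by (simp add: padB_def)
  qed
  have "ssum k (padB B D) = (\<Sum>i<k. (\<Sum>j<k. size2 (B i j)) + (if i = 0 then D else 0))"
    unfolding ssum_def using row by simp
  also have "\<dots> = ssum k B + D" using assms by (simp add: sum.distrib ssum_def)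
  finally show ?thesis .
qed

lemma ssum_ge: "k * k \<le> ssum k A"
proof -
  have "(\<Sum>i<k. \<Sum>j<k. (1::nat)) \<le> (\<Sum>i<k. \<Sum>j<k. size2 (A i j))"
    by (intro sum_mono) (metis One_nat_def size2_ge1)
  then show ?thesis by (simp add: ssum_def)
qed

lemma enc_props:
  assumes "X \<in> mat_pos k" "Y \<in> mat_pos k" "i < k" "j < k"
  shows "1 \<le> encB k X Y i j" "encB k X Y i j \<le> maxtimes k X Y i j"
    "Y (sg k i j) j \<le> maxtimes k X Y i j"
proof -
  have s: "sg k i j < k" unfolding sg_def using assms by simp
  have x: "1 \<le> X i (sg k i j)" and y: "1 \<le> Y (sg k i j) j"
    using assms s unfolding mat_pos_def by auto
  show "1 \<le> encB k X Y i j" using enc_bounds(1)[OF x y] assms unfolding encB_def cc_def by simp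
  have "encB k X Y i j \<le> X i (sg k i j) * Y (sg k i j) j"
    using enc_bounds(2)[OF x y] assms unfolding encB_def cc_def by simp
  also have "\<dots> \<le> maxtimes k X Y i j" using prod_le[OF assms(1,2,3,4) s] .
  finally show "encB k X Y i j \<le> maxtimes k X Y i j" .
  have "Y (sg k i j) j \<le> X i (sg k i j) * Y (sg k i j) j" using x by simp
  also have "\<dots> \<le> maxtimes k X Y i j" using prod_le[OF assms(1,2,3,4) s] .
  finally show "Y (sg k i j) j \<le> maxtimes k X Y i j" .
qed

lemma FF_image:
  assumes k: "1 \<le> k" and l: "1 \<le> l" "l \<le> m" and A: "A \<in> Ml k l" and XY: "(X, Y) \<in> Vsol k A"
  shows "FF k (A, (X, Y)) \<in> Ml k l \<times> (PiE ({..<k}\<times>{..<k}) (\<lambda>_. {1..m}) \<times> {..<m})"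
proof -
  have X: "X \<in> mat_pos k" and Y: "Y \<in> mat_pos k" and AXY: "maxtimes k X Y = A"
    using XY unfolding Vsol_def by auto
  have Am: "A \<in> mat_pos k" and Al: "size2_mat k A = l" using A unfolding Ml_def by auto
  define B where "B = encB k X Y"
  define D where "D = ssum k A - ssum k B"
  have B1: "\<And>i j. i < k \<Longrightarrow> j < k \<Longrightarrow> 1 \<le> B i j"
    using enc_props(1)[OF X Y] unfolding B_def by blast
  have BA: "\<And>i j. i < k \<Longrightarrow> j < k \<Longrightarrow> B i j \<le> A i j"
    using enc_props(2)[OF X Y] AXY unfolding B_def by blast
  have B0: "\<And>i j. \<not> (i < k \<and> j < k) \<Longrightarrow> B i j = 0" unfolding B_def encB_def by auto
  have sBA: "ssum k B \<le> ssum k A"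
    unfolding ssum_def using B1 BA by (intro sum_mono) (simp add: size2_mono)
  have kk1: "1 \<le> k * k" using k by simp
  have sB1: "1 \<le> ssum k B" using ssum_ge[of k B] kk1 by linarith
  have kk: "1 \<le> k^2" using k by simp
  have sAl: "ssum k A \<le> l" using Al kk unfolding size2_mat_def ssum_def by linarith
  have Dm: "D < m" unfolding D_def using sBA sB1 sAl l by linarith
  have sP: "ssum k (padB B D) = ssum k A"
    using ssum_pad[of k B D] B1[of 0 0] k sBA unfolding D_def by simp
  have Pm: "padB B D \<in> mat_pos k"
    unfolding mat_pos_def padB_def using B1 B0 k
    by (auto simp: one_le_mult_iff)
  have PM: "padB B D \<in> Ml k l"
    using Pm sP Al unfolding Ml_def size2_mat_def ssum_def by simp
  have T: "tab k Y \<in> PiE ({..<k}\<times>{..<k}) (\<lambda>_. {1..m})"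
  proof -
    have "\<forall>p\<in>{..<k}\<times>{..<k}. (\<lambda>(i,j). size2 (Y (sg k i j) j)) p \<in> {1..m}"
    proof (intro ballI)
      fix p assume p: "p \<in> {..<k}\<times>{..<k}"
      obtain i j where pij: "p = (i, j)" by (cases p)
      have ij: "i < k" "j < k" using p pij by auto
      have "1 \<le> Y (sg k i j) j" using Y ij unfolding mat_pos_def sg_def by auto
      then have "size2 (Y (sg k i j) j) \<le> size2 (A i j)"
        using size2_mono enc_props(3)[OF X Y] ij AXY by auto
      also have "\<dots> \<le> ssum k A" using entry_le ij by simp
      finally show "(\<lambda>(i,j). size2 (Y (sg k i j) j)) p \<in> {1..m}"
        using sAl l size2_ge1 pij by auto
    qed
    then show ?thesis unfolding tab_def by (subst restrict_PiE_iff)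
  qed
  show ?thesis unfolding FF_def Let_def using PM T Dm unfolding B_def D_def by simp
qed

lemma FF_inj:
  assumes k: "1 \<le> k"
  shows "inj_on (FF k) (Sigma (Ml k l) (Vsol k))"
proof (rule inj_onI)
  fix p1 p2 assume m1: "p1 \<in> Sigma (Ml k l) (Vsol k)" and m2: "p2 \<in> Sigma (Ml k l) (Vsol k)"
    and eq0: "FF k p1 = FF k p2"
  obtain A1 X1 Y1 where p1: "p1 = (A1, X1, Y1)" by (cases p1) auto
  obtain A2 X2 Y2 where p2: "p2 = (A2, X2, Y2)" by (cases p2) auto
  have a1: "A1 \<in> Ml k l" "(X1, Y1) \<in> Vsol k A1" using m1 p1 by auto
  have a2: "A2 \<in> Ml k l" "(X2, Y2) \<in> Vsol k A2" using m2 p2 by auto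
  have eq: "FF k (A1, X1, Y1) = FF k (A2, X2, Y2)" using eq0 p1 p2 by simp
  have X1: "X1 \<in> mat_pos k" "Y1 \<in> mat_pos k" "maxtimes k X1 Y1 = A1" using a1 unfolding Vsol_def by auto
  have X2: "X2 \<in> mat_pos k" "Y2 \<in> mat_pos k" "maxtimes k X2 Y2 = A2" using a2 unfolding Vsol_def by auto
  define D1 where "D1 = ssum k A1 - ssum k (encB k X1 Y1)"
  define D2 where "D2 = ssum k A2 - ssum k (encB k X2 Y2)"
  have e1: "padB (encB k X1 Y1) D1 = padB (encB k X2 Y2) D2" and e2: "tab k Y1 = tab k Y2" and e3: "D1 = D2"
    using eq unfolding FF_def Let_def D1_def D2_def by auto
  have key: "X1 i (sg k i j) = X2 i (sg k i j) \<and> Y1 (sg k i j) j = Y2 (sg k i j) j"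
    if ij: "i < k" "j < k" for i j
  proof -
    have s: "sg k i j < k" unfolding sg_def using ij by simp
    have y1: "1 \<le> Y1 (sg k i j) j" using X1 s ij unfolding mat_pos_def by auto
    have y2: "1 \<le> Y2 (sg k i j) j" using X2 s ij unfolding mat_pos_def by auto
    have "padB (encB k X1 Y1) D1 i j = padB (encB k X2 Y2) D1 i j" using e1 e3 by simp
    then have "encB k X1 Y1 i j = encB k X2 Y2 i j"
      unfolding padB_def by (auto split: if_splits)
    then have ce: "cc (X1 i (sg k i j)) (Y1 (sg k i j) j) = cc (X2 i (sg k i j)) (Y2 (sg k i j) j)"
      using ij unfolding encB_def by simp
    have "tab k Y1 (i, j) = tab k Y2 (i, j)" using e2 by simp
    then have "size2 (Y1 (sg k i j) j) = size2 (Y2 (sg k i j) j)" using ij unfolding tab_def by simp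
    then show ?thesis using dec[OF y1 y2] ce unfolding cc_def by blast
  qed
  have XX: "X1 = X2"
  proof (intro ext)
    fix i l
    show "X1 i l = X2 i l"
    proof (cases "i < k \<and> l < k")
      case True
      define j where "j = (l + k - i) mod k"
      have sj: "sg k i j = l" unfolding sg_def j_def using sig1 True by blast
      have jk: "j < k" unfolding j_def using True by simp
      have "X1 i (sg k i j) = X2 i (sg k i j)" using key[OF _ jk] True by blast
      then show ?thesis unfolding sj .
    next
      case False
      then show ?thesis using X1 X2 unfolding mat_pos_def by auto
    qed
  qed
  have YY: "Y1 = Y2"
  proof (intro ext)
    fix l j
    show "Y1 l j = Y2 l j"
    proof (cases "l < k \<and> j < k")
      case True
      define i where "i = (l + k - j) mod k"
      have si: "sg k i j = l" unfolding sg_def i_def using sig2 True by blast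
      have ik: "i < k" unfolding i_def using True by simp
      have "Y1 (sg k i j) j = Y2 (sg k i j) j" using key[OF ik] True by blast
      then show ?thesis unfolding si .
    next
      case False
      then show ?thesis using X1 X2 unfolding mat_pos_def by auto
    qed
  qed
  show "p1 = p2" using XX YY X1 X2 p1 p2 by simp
qed

lemma finite_Ml:
  assumes k: "1 \<le> k" shows "finite (Ml k l)"
proof -
  let ?g = "\<lambda>f :: nat \<times> nat \<Rightarrow> nat. \<lambda>i j. if i < k \<and> j < k then f (i, j) else 0"
  have "Ml k l \<subseteq> ?g ` PiE ({..<k}\<times>{..<k}) (\<lambda>_. {..<2^l})"
  proof
    fix A assume A: "A \<in> Ml k l"
    have Am: "A \<in> mat_pos k" and Al: "size2_mat k A = l" using A unfolding Ml_def by auto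
    have kk: "1 \<le> k^2" using k by simp
    have sAl: "ssum k A \<le> l" using Al kk unfolding size2_mat_def ssum_def by linarith
    let ?f = "restrict (\<lambda>(i,j). A i j) ({..<k}\<times>{..<k})"
    have "?f \<in> PiE ({..<k}\<times>{..<k}) (\<lambda>_. {..<2^l})"
    proof -
      have "\<forall>p\<in>{..<k}\<times>{..<k}. (\<lambda>(i,j). A i j) p \<in> {..<(2::nat)^l}"
      proof (intro ballI)
        fix p assume p: "p \<in> {..<k}\<times>{..<k}"
        obtain i j where pij: "p = (i, j)" by (cases p)
        have ij: "i < k" "j < k" using p pij by auto
        have "1 \<le> A i j" using Am ij unfolding mat_pos_def by auto
        then have "A i j < 2 ^ size2 (A i j)" using size2_char by blast
        also have "\<dots> \<le> 2 ^ l" using entry_le[of i k j A] ij sAl by simp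
        finally show "(\<lambda>(i,j). A i j) p \<in> {..<(2::nat)^l}" using pij by simp
      qed
      then show ?thesis by (subst restrict_PiE_iff) 
    qed
    moreover have "A = ?g ?f"
      using Am unfolding mat_pos_def by (auto intro!: ext)
    ultimately show "A \<in> ?g ` PiE ({..<k}\<times>{..<k}) (\<lambda>_. {..<2^l})" by blast
  qed
  moreover have "finite (?g ` PiE ({..<k}\<times>{..<k}) (\<lambda>_. {..<2^l}))"
    by (intro finite_imageI finite_PiE) auto
  ultimately show ?thesis by (rule finite_subset)
qed

theorem mainTheorem15:
  fixes k l m :: nat and P :: "real poly"
  assumes "1 \<le> k" and "1 \<le> l" and "l \<le> m" and "poly P (real m) > 0"
  shows "real (card (Sset k l (poly P (real m))))
           \<le> real m ^ (k^2 + 1) / poly P (real m) * real (card (Ml k l))"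
proof -
  define c where "c = poly P (real m)"
  have c0: "c > 0" using assms(4) c_def by simp
  define T where "T = PiE ({..<k}\<times>{..<k}) (\<lambda>_::nat\<times>nat. {1..m}) \<times> {..<m}"
  define Tg where "Tg = Ml k l \<times> T"
  define Sg where "Sg = Sigma (Ml k l) (Vsol k)"
  have fM: "finite (Ml k l)" using finite_Ml assms(1) by blast
  have fT: "finite T" unfolding T_def by (intro finite_cartesian_product finite_PiE) auto
  have fTg: "finite Tg" unfolding Tg_def using fM fT by simp
  have cT: "card T = m^(k^2) * m" unfolding T_def
    by (simp add: card_cartesian_product card_PiE power2_eq_square)
  have cTg: "card Tg = card (Ml k l) * (m^(k^2) * m)" unfolding Tg_def using cT
    by (simp add: card_cartesian_product)
  have sub: "FF k ` Sg \<subseteq> Tg" unfolding Sg_def Tg_def T_def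
  proof (rule image_subsetI)
    fix p assume "p \<in> Sigma (Ml k l) (Vsol k)"
    then obtain A X Y where "p = (A, X, Y)" "A \<in> Ml k l" "(X, Y) \<in> Vsol k A"
      by (cases p) auto
    then show "FF k p \<in> Ml k l \<times> ({..<k} \<times> {..<k} \<rightarrow>\<^sub>E {1..m}) \<times> {..<m}"
      using FF_image[OF assms(1,2,3)] by simp
  qed
  have inj: "inj_on (FF k) Sg" unfolding Sg_def using FF_inj[OF assms(1)] .
  have fSg: "finite Sg" using finite_imageD[OF finite_subset[OF sub fTg] inj] .
  have cSg: "card Sg \<le> card Tg" using card_inj_on_le[OF inj sub fTg] .
  have fV: "finite (Vsol k A)" if "A \<in> Ml k l" for A
  proof -
    have "{A} \<times> Vsol k A \<subseteq> Sg" unfolding Sg_def using that by auto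
    then have "finite ({A} \<times> Vsol k A)" using fSg finite_subset by blast
    then show ?thesis using finite_cartesian_productD2 by blast
  qed
  have cS: "card Sg = (\<Sum>A\<in>Ml k l. card (Vsol k A))" unfolding Sg_def
    using card_SigmaI fM fV by blast
  have SM: "Sset k l c \<subseteq> Ml k l" unfolding Sset_def by auto
  have fS: "finite (Sset k l c)" using finite_subset[OF SM fM] .
  have "real (card (Sset k l c)) * c = (\<Sum>A\<in>Sset k l c. c)" by simp
  also have "\<dots> \<le> (\<Sum>A\<in>Sset k l c. real (card (Vsol k A)))"
    by (intro sum_mono) (auto simp: Sset_def)
  also have "\<dots> \<le> (\<Sum>A\<in>Ml k l. real (card (Vsol k A)))"
    by (intro sum_mono2 fM SM) auto
  also have "\<dots> = real (card Sg)" using cS by simp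
  also have "\<dots> \<le> real (card Tg)" using cSg by simp
  also have "\<dots> = real m ^ (k^2 + 1) * real (card (Ml k l))" using cTg by simp
  finally have "real (card (Sset k l c)) * c \<le> real m ^ (k^2 + 1) * real (card (Ml k l))" .
  then have "real (card (Sset k l c)) \<le> real m ^ (k^2 + 1) * real (card (Ml k l)) / c"
    using c0 by (simp add: pos_le_divide_eq)
  then show ?thesis unfolding c_def by simp
qed

end
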